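(* Let $\mathcal{X}$ be a connected $n$-premaniplex and let $(\mathcal{Y},\eta)$ be an $(n,m)$-voltage operator that preserves connectivity. Let $\gamma\in\operatorname{Aut}(\mathcal{X}\rtimes_\eta\mathcal{Y})$ be such that for every flag $(x,y)$ of $\mathcal{X}\rtimes_\eta\mathcal{Y}$, the $\mathcal{Y}$-coordinate of $(x,y)\gamma$ is $y$. Then there is an automorphism $\alpha\in\operatorname{Aut}(\mathcal{X})$ such that $(x,y)\gamma=(x\alpha,y)$ for all $(x,y)\in\mathcal{X}\times\mathcal{Y}$; that is, $\gamma$ may be regarded as an automorphism of $\mathcal{X}$.
   Context: A graph has a set of vertices and a set of darts, each dart $d$ having a starting vertex and an inverse dart $d^{-1}$ (an involution; semi-edges $d=d^{-1}$ and parallel edges are allowed). An $n$-premaniplex is a graph whose edges are coloured with $\{0,\dots,n-1\}$ such that every vertex (called a flag) is the start of exactly one dart of each colour, and for $|i-j|\ge 2$ every alternating path of length 4 with colours $i,j$ is closed. For a flag $x$, $x^i$ denotes the end of the $i$-dart at $x$. The universal Coxeter group $\mathcal{C}^n=\langle r_0,\dots,r_{n-1}\mid r_i^2=1,\ (r_ir_j)^2=1 \text{ for } |i-j|\ge2\rangle$ acts on the left on the flags of any $n$-premaniplex by $r_ix=x^i$. A homomorphism of premaniplexes preserves $i$-adjacency for every $i$; automorphisms act on the right, so $(\omega x)\gamma=\omega(x\gamma)$ for every $\omega\in\mathcal{C}^n$. For a flag $y$ of an $m$-premaniplex $\mathcal{Y}$ and $\omega\in\mathcal{C}^m$, $W_\omega(y)$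 denotes the homotopy class of paths starting at $y$ whose colours $i_1,\dots,i_k$ (in order) satisfy $r_{i_k}\cdots r_{i_1}=\omega$ (two paths are homotopic if they have the same start and the same associated element); it ends at $\omega y$. These classes form the fundamental groupoid $\Pi(\mathcal{Y})$ under concatenation, and $\Pi^y(\mathcal{Y})$ is the group of closed ones at $y$. A voltage assignment is $\eta:\Pi(\mathcal{Y})\to\mathcal{C}^n$ with $\eta(W_1W_2)=\eta(W_2)\eta(W_1)$ whenever $W_1W_2$ is defined; $(\mathcal{Y},\eta)$ with $\mathcal{Y}$ an $m$-premaniplex is an $(n,m)$-voltage operator. For an $n$-premaniplex $\mathcal{X}$, $\mathcal{X}\rtimes_\eta\mathcal{Y}$ is the $m$-premaniplex with flag set $\mathcal{X}\times\mathcal{Y}$ and $(x,y)^i=(\eta(W_{r_i}(y))x,\ r_iy)$ for $i\in\{0,\dots,m-1\}$; thus $\omega(x,y)=(\eta(W_\omega(y))x,\omega y)$. The operator preserves connectivity if $\mathcal{X}\rtimes_\eta\mathcal{Y}$ is connected whenever $\mathcal{X}$ is connected. Standing convention: $\mathcal{Y}$ has a spanning tree all of whose darts have trivial voltage. *)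

theory Defs
  imports Main
begin

text \<open>Words over colours {0..<n} are lists in PATH order: the list [i1,...,ik]
  stands for the element r_ik ... r_i1 of the universal Coxeter group C^n.\<close>

definition words :: "nat \<Rightarrow> nat list set" where
  "words n = {w. set w \<subseteq> {..<n}}"

inductive cox_eq :: "nat \<Rightarrow> nat list \<Rightarrow> nat list \<Rightarrow> bool" for n :: nat where
  refl: "w \<in> words n \<Longrightarrow> cox_eq n w w"
| sym: "cox_eq n a b \<Longrightarrow> cox_eq n b a"
| trans: "cox_eq n a b \<Longrightarrow> cox_eq n b c \<Longrightarrow> cox_eq n a c"
| cancel: "u \<in> words n \<Longrightarrow> v \<in> words n \<Longrightarrow> i < n \<Longrightarrow>
      cox_eq n (u @ [i, i] @ v) (u @ v)"
| comm: "u \<in> words n \<Longrightarrow> v \<in> words n \<Longrightarrow> i < n \<Longrightarrow> j < n \<Longrightarrow>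
      (i + 2 \<le> j \<or> j + 2 \<le> i) \<Longrightarrow> cox_eq n (u @ [i, j] @ v) (u @ [j, i] @ v)"

text \<open>A premaniplex with flag set F; s i x is x^i, the end of the i-dart at x.\<close>
definition premaniplex :: "nat \<Rightarrow> 'a set \<Rightarrow> (nat \<Rightarrow> 'a \<Rightarrow> 'a) \<Rightarrow> bool" where
  "premaniplex n F s \<longleftrightarrow>
     (\<forall>x\<in>F. \<forall>i<n. s i x \<in> F \<and> s i (s i x) = x) \<and>
     (\<forall>x\<in>F. \<forall>i<n. \<forall>j<n. (i + 2 \<le> j \<or> j + 2 \<le> i) \<longrightarrow> s j (s i (s j (s i x))) = x)"

definition act :: "(nat \<Rightarrow> 'a \<Rightarrow> 'a) \<Rightarrow> nat list \<Rightarrow> 'a \<Rightarrow> 'a" where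
  "act s w x = foldl (\<lambda>z i. s i z) x w"

definition adj_rel :: "nat \<Rightarrow> 'a set \<Rightarrow> (nat \<Rightarrow> 'a \<Rightarrow> 'a) \<Rightarrow> ('a \<times> 'a) set" where
  "adj_rel n F s = {(x, s i x) | x i. x \<in> F \<and> i < n}"

definition pm_connected :: "nat \<Rightarrow> 'a set \<Rightarrow> (nat \<Rightarrow> 'a \<Rightarrow> 'a) \<Rightarrow> bool" where
  "pm_connected n F s \<longleftrightarrow> (\<forall>a\<in>F. \<forall>b\<in>F. (a, b) \<in> (adj_rel n F s)\<^sup>*)"

definition pm_automorphism :: "nat \<Rightarrow> 'a set \<Rightarrow> (nat \<Rightarrow> 'a \<Rightarrow> 'a) \<Rightarrow> ('a \<Rightarrow> 'a) \<Rightarrow> bool" where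
  "pm_automorphism n F s g \<longleftrightarrow> bij_betw g F F \<and> (\<forall>x\<in>F. \<forall>i<n. g (s i x) = s i (g x))"

text \<open>A voltage assignment eta on the fundamental groupoid of the m-premaniplex (FY,sY):
  eta y w is the voltage of the class W_omega(y), omega being the element represented by w.\<close>
definition voltage_assignment ::
  "nat \<Rightarrow> nat \<Rightarrow> 'y set \<Rightarrow> (nat \<Rightarrow> 'y \<Rightarrow> 'y) \<Rightarrow> ('y \<Rightarrow> nat list \<Rightarrow> nat list) \<Rightarrow> bool" where
  "voltage_assignment n m FY sY eta \<longleftrightarrow>
     (\<forall>y\<in>FY. \<forall>w\<in>words m. eta y w \<in> words n) \<and>
     (\<forall>y\<in>FY. \<forall>w w'. cox_eq m w w' \<longrightarrow> cox_eq n (eta y w) (eta y w')) \<and>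
     (\<forall>y\<in>FY. \<forall>w1\<in>words m. \<forall>w2\<in>words m.
        cox_eq n (eta y (w1 @ w2)) (eta y w1 @ eta (act sY w1 y) w2))"

definition mix_op :: "(nat \<Rightarrow> 'x \<Rightarrow> 'x) \<Rightarrow> (nat \<Rightarrow> 'y \<Rightarrow> 'y) \<Rightarrow> ('y \<Rightarrow> nat list \<Rightarrow> nat list)
     \<Rightarrow> nat \<Rightarrow> 'x \<times> 'y \<Rightarrow> 'x \<times> 'y" where
  "mix_op sX sY eta i p = (act sX (eta (snd p) [i]) (fst p), sY i (snd p))"

text \<open>Preserving connectivity. Flag sets of X are taken inside nat: every connected
  premaniplex (finitely many colours) is countable, so this is no restriction.\<close>
definition preserves_connectivity ::
  "nat \<Rightarrow> nat \<Rightarrow> 'y set \<Rightarrow> (nat \<Rightarrow> 'y \<Rightarrow> 'y) \<Rightarrow> ('y \<Rightarrow> nat list \<Rightarrow> nat list) \<Rightarrow> bool" where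
  "preserves_connectivity n m FY sY eta \<longleftrightarrow>
     (\<forall>(FX :: nat set) sX. premaniplex n FX sX \<and> pm_connected n FX sX \<longrightarrow>
        pm_connected m (FX \<times> FY) (mix_op sX sY eta))"

text \<open>Spanning trees of Y given as sets of darts; the i-dart at y is (y,i), its inverse
  (y^i, i). A tree: symmetric dart set, connected and spanning, every edge a bridge
  (equivalently: acyclic; semi-edges and parallel edges are thereby excluded).\<close>
definition dart_rel :: "(nat \<Rightarrow> 'y \<Rightarrow> 'y) \<Rightarrow> ('y \<times> nat) set \<Rightarrow> ('y \<times> 'y) set" where
  "dart_rel sY T = {(y, sY i y) | y i. (y, i) \<in> T}"

definition spans_connected :: "'y set \<Rightarrow> (nat \<Rightarrow> 'y \<Rightarrow> 'y) \<Rightarrow> ('y \<times> nat) set \<Rightarrow> bool" where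
  "spans_connected FY sY T \<longleftrightarrow> (\<forall>a\<in>FY. \<forall>b\<in>FY. (a, b) \<in> (dart_rel sY T)\<^sup>*)"

definition spanning_tree :: "nat \<Rightarrow> 'y set \<Rightarrow> (nat \<Rightarrow> 'y \<Rightarrow> 'y) \<Rightarrow> ('y \<times> nat) set \<Rightarrow> bool" where
  "spanning_tree m FY sY T \<longleftrightarrow>
     T \<subseteq> FY \<times> {..<m} \<and>
     (\<forall>(y, i)\<in>T. (sY i y, i) \<in> T) \<and>
     spans_connected FY sY T \<and>
     (\<forall>(y, i)\<in>T. \<not> spans_connected FY sY (T - {(y, i), (sY i y, i)}))"

text \<open>Standing convention: a spanning tree all of whose darts have trivial voltage.\<close>
definition has_trivial_spanning_tree ::
  "nat \<Rightarrow> nat \<Rightarrow> 'y set \<Rightarrow> (nat \<Rightarrow> 'y \<Rightarrow> 'y) \<Rightarrow> ('y \<Rightarrow> nat list \<Rightarrow> nat list) \<Rightarrow> bool" where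
  "has_trivial_spanning_tree n m FY sY eta \<longleftrightarrow>
     (\<exists>T. spanning_tree m FY sY T \<and> (\<forall>(y, i)\<in>T. cox_eq n (eta y [i]) []))"

end

theory Submission
  imports Defs "HOL-Library.Countable_Set"
begin

lemma act_Nil[simp]: "act s [] x = x" by (simp add: act_def)
lemma act_Cons[simp]: "act s (i # w) x = act s w (s i x)" by (simp add: act_def)
lemma act_append[simp]: "act s (u @ v) x = act s v (act s u x)" by (simp add: act_def)

lemma words_simps[simp]: "[] \<in> words n" "(i # w \<in> words n) = (i < n \<and> w \<in> words n)"
  "(u @ v \<in> words n) = (u \<in> words n \<and> v \<in> words n)" "(rev w \<in> words n) = (w \<in> words n)"
  by (auto simp: words_def)

lemma cox_words: "cox_eq n a b \<Longrightarrow> a \<in> words n \<and> b \<in> words n"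
  by (induction rule: cox_eq.induct) (auto simp: words_def)

lemma act_closed:
  assumes "\<forall>x\<in>F. \<forall>i<n. s i x \<in> F" "x \<in> F" "w \<in> words n"
  shows "act s w x \<in> F"
  using assms(2,3)
proof (induction w arbitrary: x)
  case Nil then show ?case by simp
next
  case (Cons i w) then show ?case using assms(1) by auto
qed

lemma pm_closed: "premaniplex n F s \<Longrightarrow> \<forall>x\<in>F. \<forall>i<n. s i x \<in> F"
  by (simp add: premaniplex_def)

lemma pm_inv: "premaniplex n F s \<Longrightarrow> x \<in> F \<Longrightarrow> i < n \<Longrightarrow> s i (s i x) = x"
  by (simp add: premaniplex_def)

lemma pm_comm:
  assumes pm: "premaniplex n F s" and x: "x \<in> F" and ij: "i < n" "j < n" "i + 2 \<le> j \<or> j + 2 \<le> i"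
  shows "s j (s i x) = s i (s j x)"
proof -
  define b where "b = s j (s i x)"
  have bF: "b \<in> F" using pm x ij pm_closed unfolding b_def by blast
  have 1: "s j (s i b) = x" using pm x ij unfolding b_def premaniplex_def by blast
  have sib: "s i b \<in> F" using pm bF ij pm_closed by blast
  have "s i b = s j x" using 1 pm_inv[OF pm sib ij(2)] by metis
  then have "s i (s i b) = s i (s j x)" by simp
  then show ?thesis using pm_inv[OF pm bF ij(1)] b_def by simp
qed

lemma act_cox:
  assumes pm: "premaniplex n F s"
  shows "cox_eq n w w' \<Longrightarrow> \<forall>x\<in>F. act s w x = act s w' x"
proof (induction rule: cox_eq.induct)
  case (cancel u v i)
  show ?case
  proof
    fix x assume "x \<in> F"
    then have "act s u x \<in> F" using act_closed[OF pm_closed[OF pm]] cancel by blast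
    then show "act s (u @ [i, i] @ v) x = act s (u @ v) x"
      using pm_inv[OF pm _ cancel(3)] by simp
  qed
next
  case (comm u v i j)
  show ?case
  proof
    fix x assume "x \<in> F"
    then have "act s u x \<in> F" using act_closed[OF pm_closed[OF pm]] comm by blast
    then show "act s (u @ [i, j] @ v) x = act s (u @ [j, i] @ v) x"
      using pm_comm[OF pm _ comm(3,4,5)] by simp
  qed
qed auto

lemma act_rev:
  assumes pm: "premaniplex n F s"
  shows "x \<in> F \<Longrightarrow> w \<in> words n \<Longrightarrow> act s (rev w) (act s w x) = x"
proof (induction w arbitrary: x)
  case Nil then show ?case by simp
next
  case (Cons i w)
  then have "s i x \<in> F" using pm_closed[OF pm] by auto
  then show ?case using Cons pm_inv[OF pm] by auto
qed

lemma act_rtrancl: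
  assumes cl: "\<forall>x\<in>F. \<forall>i<n. s i x \<in> F" and x: "x \<in> F"
  shows "w \<in> words n \<Longrightarrow> (x, act s w x) \<in> (adj_rel n F s)\<^sup>*"
proof (induction w rule: rev_induct)
  case Nil then show ?case by simp
next
  case (snoc i w)
  then have w: "w \<in> words n" and i: "i < n" by auto
  have "act s w x \<in> F" using act_closed[OF cl x w] .
  then have "(act s w x, s i (act s w x)) \<in> adj_rel n F s" using i unfolding adj_rel_def by blast
  then show ?case using snoc w by (simp add: rtrancl_into_rtrancl)
qed

lemma rtrancl_act:
  "(a, b) \<in> (adj_rel n F s)\<^sup>* \<Longrightarrow> \<exists>w\<in>words n. b = act s w a"
proof (induction rule: rtrancl_induct)
  case base then show ?case by (intro bexI[of _ "[]"]) auto
next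
  case (step b c)
  then obtain w where w: "w \<in> words n" "b = act s w a" by blast
  from step(2) obtain i where "c = s i b" "i < n" unfolding adj_rel_def by blast
  then show ?case using w by (intro bexI[of _ "w @ [i]"]) auto
qed

lemma transport:
  assumes pm: "premaniplex n F s" and con: "pm_connected n F s" and inj: "inj_on e F"
  defines "F' \<equiv> e ` F" and "s' \<equiv> \<lambda>i k. e (s i (inv_into F e k))"
  shows "premaniplex n F' s' \<and> pm_connected n F' s' \<and>
         (\<forall>a\<in>F. \<forall>w\<in>words n. act s' w (e a) = e (act s w a))"
proof -
  have s'e: "s' i (e a) = e (s i a)" if "a \<in> F" for i a
    using inj that unfolding s'_def by simp
  have actt: "act s' w (e a) = e (act s w a)" if "a \<in> F" "w \<in> words n" for a w
    using that
  proof (induction w arbitrary: a)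
    case Nil then show ?case by simp
  next
    case (Cons i w)
    then have "s i a \<in> F" using pm_closed[OF pm] by auto
    then show ?case using Cons s'e by auto
  qed
  have cl': "\<forall>x\<in>F'. \<forall>i<n. s' i x \<in> F'"
    using s'e pm_closed[OF pm] unfolding F'_def by auto
  have pm': "premaniplex n F' s'"
    unfolding premaniplex_def
  proof (intro conjI ballI allI impI)
    fix k i assume "k \<in> F'" "i < n"
    then obtain a where a: "a \<in> F" "k = e a" unfolding F'_def by blast
    show "s' i k \<in> F'" using cl' \<open>k \<in> F'\<close> \<open>i < n\<close> by blast
    have "s i a \<in> F" using pm_closed[OF pm] a \<open>i<n\<close> by blast
    then show "s' i (s' i k) = k" using a s'e pm_inv[OF pm a(1) \<open>i<n\<close>] by simp
  next
    fix k i j assume k: "k \<in> F'" and ij: "i < n" "j < n" "i + 2 \<le> j \<or> j + 2 \<le> i"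
    then obtain a where a: "a \<in> F" "k = e a" unfolding F'_def by blast
    have "s i a \<in> F" "s j (s i a) \<in> F" "s i (s j (s i a)) \<in> F"
      using pm_closed[OF pm] a ij by blast+
    then have "s' j (s' i (s' j (s' i k))) = e (s j (s i (s j (s i a))))"
      using a s'e by simp
    moreover have "s j (s i (s j (s i a))) = a" using pm a ij unfolding premaniplex_def by blast
    ultimately show "s' j (s' i (s' j (s' i k))) = k" using a by simp
  qed
  have "pm_connected n F' s'"
    unfolding pm_connected_def
  proof (intro ballI)
    fix k l assume "k \<in> F'" "l \<in> F'"
    then obtain a b where ab: "a \<in> F" "b \<in> F" "k = e a" "l = e b" unfolding F'_def by blast
    then obtain w where w: "w \<in> words n" "b = act s w a"
      using con rtrancl_act unfolding pm_connected_def by metis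
    have "l = act s' w k" using actt ab w by simp
    then show "(k, l) \<in> (adj_rel n F' s')\<^sup>*" using act_rtrancl[OF cl' \<open>k \<in> F'\<close> w(1)] by simp
  qed
  then show ?thesis using pm' actt by blast
qed

lemma component:
  assumes pm: "premaniplex n F s" and p0: "p0 \<in> F"
  defines "C \<equiv> (\<lambda>w. act s w p0) ` words n"
  shows "premaniplex n C s \<and> pm_connected n C s \<and> countable C \<and> C \<subseteq> F \<and> p0 \<in> C
     \<and> (\<forall>q\<in>C. \<forall>v\<in>words n. act s v q \<in> C)"
proof -
  have CF: "C \<subseteq> F" using act_closed[OF pm_closed[OF pm] p0] unfolding C_def by auto
  have clact: "\<forall>q\<in>C. \<forall>v\<in>words n. act s v q \<in> C"
  proof (intro ballI)
    fix q v assume "q \<in> C" "v \<in> words n"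
    then obtain w where "w \<in> words n" "q = act s w p0" unfolding C_def by blast
    then show "act s v q \<in> C" unfolding C_def using \<open>v \<in> words n\<close>
      by (intro image_eqI[of _ _ "w @ v"]) auto
  qed
  have cl: "\<forall>x\<in>C. \<forall>i<n. s i x \<in> C"
  proof (intro ballI allI impI)
    fix x i assume "x \<in> C" "i < n"
    then show "s i x \<in> C" using clact[rule_format, of x "[i]"] by simp
  qed
  have pmC: "premaniplex n C s" using pm CF cl unfolding premaniplex_def by blast
  have con: "pm_connected n C s"
    unfolding pm_connected_def
  proof (intro ballI)
    fix a b assume "a \<in> C" "b \<in> C"
    then obtain w0 w1 where w: "w0 \<in> words n" "w1 \<in> words n" "a = act s w0 p0" "b = act s w1 p0"
      unfolding C_def by blast
    have beq: "b = act s (rev w0 @ w1) a" using w act_rev[OF pm p0 w(1)] by simp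
    have "(a, act s (rev w0 @ w1) a) \<in> (adj_rel n C s)\<^sup>*"
      by (rule act_rtrancl[OF cl \<open>a \<in> C\<close>]) (simp add: w)
    then show "(a, b) \<in> (adj_rel n C s)\<^sup>*" using beq by (simp only:)
  qed
  have "countable (words n)" by (rule countable_subset[of _ UNIV]) auto
  then have "countable C" unfolding C_def by simp
  moreover have "p0 \<in> C" unfolding C_def by (intro image_eqI[of _ _ "[]"]) auto
  ultimately show ?thesis using pmC con CF clact by blast
qed

definition diag :: "(nat \<Rightarrow> 'a \<Rightarrow> 'a) \<Rightarrow> nat \<Rightarrow> 'a \<times> 'a \<Rightarrow> 'a \<times> 'a" where
  "diag s i p = (s i (fst p), s i (snd p))"

lemma act_diag: "act (diag s) w (a, b) = (act s w a, act s w b)"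
  by (induction w arbitrary: a b) (auto simp: diag_def)

lemma pm_diag: "premaniplex n F s \<Longrightarrow> premaniplex n (F \<times> F) (diag s)"
  unfolding premaniplex_def diag_def by auto

lemma mix_act:
  assumes pmX: "premaniplex n FX sX" and pmY: "premaniplex m FY sY"
    and va: "voltage_assignment n m FY sY eta" and x: "x \<in> FX" and y: "y \<in> FY"
  shows "w \<in> words m \<Longrightarrow> act (mix_op sX sY eta) w (x, y) = (act sX (eta y w) x, act sY w y)"
proof (induction w rule: rev_induct)
  case Nil
  define e where "e = eta y []"
  have ew: "e \<in> words n" using va y unfolding voltage_assignment_def e_def by auto
  have "\<forall>w1\<in>words m. \<forall>w2\<in>words m. cox_eq n (eta y (w1 @ w2)) (eta y w1 @ eta (act sY w1 y) w2)"
    using va y unfolding voltage_assignment_def by blast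
  then have "cox_eq n (eta y ([] @ [])) (eta y [] @ eta (act sY [] y) [])"
    using words_simps(1) by blast
  then have "cox_eq n e (e @ e)" unfolding e_def by simp
  then have "act sX e x = act sX (e @ e) x" using act_cox[OF pmX] x by blast
  then have "act sX e x = act sX e (act sX e x)" by (simp only: act_append)
  then have "act sX (rev e) (act sX e x) = act sX (rev e) (act sX e (act sX e x))" by (rule arg_cong)
  moreover have "act sX e x \<in> FX" using act_closed[OF pm_closed[OF pmX] x ew] .
  ultimately have "x = act sX e x" using act_rev[OF pmX _ ew] x by simp
  then show ?case unfolding e_def by simp
next
  case (snoc i w)
  then have w: "w \<in> words m" and i: "i < m" by auto
  define y' where "y' = act sY w y"
  have c: "cox_eq n (eta y (w @ [i])) (eta y w @ eta y' [i])"
    using va y w i unfolding voltage_assignment_def y'_def by auto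
  have "eta y w \<in> words n" using va y w unfolding voltage_assignment_def by auto
  then have "act sX (eta y w) x \<in> FX" using act_closed[OF pm_closed[OF pmX] x] by blast
  have "act sX (eta y (w @ [i])) x = act sX (eta y' [i]) (act sX (eta y w) x)"
    using act_cox[OF pmX c] x by simp
  then show ?case using snoc w unfolding mix_op_def y'_def by simp
qed

lemma g_act:
  assumes cl: "\<forall>p\<in>F. \<forall>i<m. s i p \<in> F" and gc: "\<forall>p\<in>F. \<forall>i<m. g (s i p) = s i (g p)"
    and p: "p \<in> F"
  shows "w \<in> words m \<Longrightarrow> g (act s w p) = act s w (g p)"
proof (induction w rule: rev_induct)
  case Nil then show ?case by simp
next
  case (snoc i w)
  then have w: "w \<in> words m" and i: "i < m" by auto
  have "act s w p \<in> F" using act_closed[OF cl p w] .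
  then show ?case using gc i snoc w by simp
qed


theorem lemma4p1:
  fixes n m :: nat
    and FX :: "'x set" and sX :: "nat \<Rightarrow> 'x \<Rightarrow> 'x"
    and FY :: "'y set" and sY :: "nat \<Rightarrow> 'y \<Rightarrow> 'y"
    and eta :: "'y \<Rightarrow> nat list \<Rightarrow> nat list"
    and g :: "'x \<times> 'y \<Rightarrow> 'x \<times> 'y"
  assumes "premaniplex n FX sX"
    and "pm_connected n FX sX"
    and "premaniplex m FY sY"
    and "voltage_assignment n m FY sY eta"
    and "has_trivial_spanning_tree n m FY sY eta"
    and "preserves_connectivity n m FY sY eta"
    and "pm_automorphism m (FX \<times> FY) (mix_op sX sY eta) g"
    and "\<forall>x\<in>FX. \<forall>y\<in>FY. snd (g (x, y)) = y"
  shows "\<exists>a. pm_automorphism n FX sX a \<and> (\<forall>x\<in>FX. \<forall>y\<in>FY. g (x, y) = (a x, y))"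
proof (cases "FY = {}")
  case True
  have "pm_automorphism n FX sX id" unfolding pm_automorphism_def by simp
  then show ?thesis using True by blast
next
  case False
  note pmX = assms(1) and pmY = assms(3) and va = assms(4)
  define M where "M = mix_op sX sY eta"
  obtain y0 where y0: "y0 \<in> FY" using False by blast
  have bij: "bij_betw g (FX \<times> FY) (FX \<times> FY)" and gc: "\<forall>p\<in>FX \<times> FY. \<forall>i<m. g (M i p) = M i (g p)"
    using assms(7) unfolding pm_automorphism_def M_def by auto
  have gmap: "g p \<in> FX \<times> FY" if "p \<in> FX \<times> FY" for p using bij that bij_betwE by blast
  have Mcl: "\<forall>p\<in>FX \<times> FY. \<forall>i<m. M i p \<in> FX \<times> FY"
  proof (intro ballI allI impI)
    fix p i assume p: "p \<in> FX \<times> FY" and i: "i < m"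
    then have "eta (snd p) [i] \<in> words n" using va unfolding voltage_assignment_def by auto
    then have "act sX (eta (snd p) [i]) (fst p) \<in> FX"
      using act_closed[OF pm_closed[OF pmX]] p by auto
    moreover have "sY i (snd p) \<in> FY" using pm_closed[OF pmY] p i by auto
    ultimately show "M i p \<in> FX \<times> FY" unfolding M_def mix_op_def by simp
  qed
  define \<alpha> where "\<alpha> x = fst (g (x, y0))" for x
  obtain T where T: "spanning_tree m FY sY T" "\<forall>(y, i)\<in>T. cox_eq n (eta y [i]) []"
    using assms(5) unfolding has_trivial_spanning_tree_def by blast
  have claim1: "\<forall>x\<in>FX. g (x, y) = (\<alpha> x, y)" if y: "y \<in> FY" for y
  proof -
    have "(y0, y) \<in> (dart_rel sY T)\<^sup>*" using T(1) y0 y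
      unfolding spanning_tree_def spans_connected_def by blast
    then show ?thesis
    proof (induction rule: rtrancl_induct)
      case base
      then show ?case using assms(8) y0 unfolding \<alpha>_def by (metis prod.collapse)
    next
      case (step b c)
      from step(2) obtain i where bi: "(b, i) \<in> T" "c = sY i b" unfolding dart_rel_def by blast
      then have b: "b \<in> FY" and i: "i < m" using T(1) unfolding spanning_tree_def by auto
      have ce: "cox_eq n (eta b [i]) []" using T(2) bi by blast
      show ?case
      proof
        fix x assume x: "x \<in> FX"
        have Mx: "M i (x, b) = (x, c)"
          using act_cox[OF pmX ce] x bi unfolding M_def mix_op_def by simp
        have ax: "\<alpha> x \<in> FX" using gmap[of "(x, b)"] step.IH x b by auto
        have Ma: "M i (\<alpha> x, b) = (\<alpha> x, c)"
          using act_cox[OF pmX ce] ax bi unfolding M_def mix_op_def by simp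
        have "g (x, c) = g (M i (x, b))" using Mx by simp
        also have "\<dots> = M i (g (x, b))" using gc x b i by blast
        also have "\<dots> = (\<alpha> x, c)" using step.IH x Ma by simp
        finally show "g (x, c) = (\<alpha> x, c)" .
      qed
    qed
  qed
  have aF: "\<alpha> x \<in> FX" if "x \<in> FX" for x using gmap[of "(x, y0)"] that y0 unfolding \<alpha>_def by auto
  have abij: "bij_betw \<alpha> FX FX"
  proof (rule bij_betw_imageI)
    show "inj_on \<alpha> FX"
    proof (rule inj_onI)
      fix x x' assume "x \<in> FX" "x' \<in> FX" "\<alpha> x = \<alpha> x'"
      then have "g (x, y0) = g (x', y0)" using claim1[OF y0] by simp
      then show "x = x'" using bij_betw_imp_inj_on[OF bij] \<open>x \<in> FX\<close> \<open>x' \<in> FX\<close> y0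
        by (auto dest: inj_onD)
    qed
    show "\<alpha> ` FX = FX"
    proof
      show "\<alpha> ` FX \<subseteq> FX" using aF by blast
      show "FX \<subseteq> \<alpha> ` FX"
      proof
        fix x' assume "x' \<in> FX"
        then have "(x', y0) \<in> g ` (FX \<times> FY)" using bij_betw_imp_surj_on[OF bij] y0 by auto
        then obtain x y where xy: "x \<in> FX" "y \<in> FY" "(x', y0) = g (x, y)" by auto
        then show "x' \<in> \<alpha> ` FX" using claim1[OF xy(2)] by auto
      qed
    qed
  qed
  have gact: "g (act M w (x, y0)) = act M w (g (x, y0))" if "x \<in> FX" "w \<in> words m" for x w
    using g_act[OF Mcl gc _ that(2)] that(1) y0 by blast
  have acomm: "\<alpha> (sX j x) = sX j (\<alpha> x)" if x: "x \<in> FX" and j: "j < n" for x j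
  proof -
    define p0 where "p0 = (x, \<alpha> x)"
    have pmD: "premaniplex n (FX \<times> FX) (diag sX)" using pm_diag[OF pmX] .
    have p0F: "p0 \<in> FX \<times> FX" using x aF unfolding p0_def by auto
    define C where "C = (\<lambda>w. act (diag sX) w p0) ` words n"
    have comp: "premaniplex n C (diag sX) \<and> pm_connected n C (diag sX) \<and> countable C \<and> C \<subseteq> FX \<times> FX
       \<and> p0 \<in> C \<and> (\<forall>q\<in>C. \<forall>v\<in>words n. act (diag sX) v q \<in> C)"
      using component[OF pmD p0F] unfolding C_def by blast
    define e where "e = to_nat_on C"
    have inj: "inj_on e C" using comp unfolding e_def by blast
    define FX' where "FX' = e ` C"
    define sX' where "sX' = (\<lambda>i k. e (diag sX i (inv_into C e k)))"
    have tr: "premaniplex n FX' sX' \<and> pm_connected n FX' sX' \<and>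
         (\<forall>a\<in>C. \<forall>w\<in>words n. act sX' w (e a) = e (act (diag sX) w a))"
      using transport[of n C "diag sX" e] comp inj unfolding FX'_def sX'_def by blast
    have pc: "pm_connected m (FX' \<times> FY) (mix_op sX' sY eta)"
      using assms(6) tr unfolding preserves_connectivity_def by blast
    have q1: "(e p0, y0) \<in> FX' \<times> FY" using comp y0 unfolding FX'_def by auto
    have jw: "[j] \<in> words n" using j by simp
    have "act (diag sX) [j] p0 \<in> C" using comp jw by blast
    then have djC: "diag sX j p0 \<in> C" by simp
    then have q2: "(e (diag sX j p0), y0) \<in> FX' \<times> FY" using y0 unfolding FX'_def by auto
    have "((e p0, y0), (e (diag sX j p0), y0)) \<in> (adj_rel m (FX' \<times> FY) (mix_op sX' sY eta))\<^sup>*"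
    proof -
      have "\<forall>a\<in>FX' \<times> FY. \<forall>b\<in>FX' \<times> FY. (a, b) \<in> (adj_rel m (FX' \<times> FY) (mix_op sX' sY eta))\<^sup>*"
        using pc by (simp only: pm_connected_def)
      from bspec[OF bspec[OF this q1] q2] show ?thesis .
    qed
    from rtrancl_act[OF this] obtain w where w: "w \<in> words m" "(e (diag sX j p0), y0) = act (mix_op sX' sY eta) w (e p0, y0)"
      by blast
    have ep0: "e p0 \<in> FX'" using q1 by simp
    have "act (mix_op sX' sY eta) w (e p0, y0) = (act sX' (eta y0 w) (e p0), act sY w y0)"
      using mix_act[OF _ pmY va ep0 y0 w(1)] tr by blast
    then have e1: "e (diag sX j p0) = act sX' (eta y0 w) (e p0)" and wy: "act sY w y0 = y0"
      using w(2) by auto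
    define v where "v = eta y0 w"
    have v: "v \<in> words n" using va y0 w(1) unfolding voltage_assignment_def v_def by blast
    have "e (diag sX j p0) = e (act (diag sX) v p0)" using e1 tr comp v unfolding v_def by auto
    moreover have "act (diag sX) v p0 \<in> C" using comp v by blast
    ultimately have "diag sX j p0 = act (diag sX) v p0" using inj djC by (auto dest: inj_onD)
    then have vx: "act sX v x = sX j x" and vax: "act sX v (\<alpha> x) = sX j (\<alpha> x)"
      unfolding p0_def diag_def act_diag by auto
    have MX: "act M w (x, y0) = (sX j x, y0)"
      using mix_act[OF pmX pmY va x y0 w(1)] vx wy unfolding M_def v_def by simp
    have MA: "act M w (\<alpha> x, y0) = (sX j (\<alpha> x), y0)"
      using mix_act[OF pmX pmY va aF[OF x] y0 w(1)] vax wy unfolding M_def v_def by simp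
    have sjx: "sX j x \<in> FX" using pm_closed[OF pmX] x j by blast
    have "(\<alpha> (sX j x), y0) = g (act M w (x, y0))" using MX claim1[OF y0] sjx by simp
    also have "\<dots> = act M w (g (x, y0))" using gact x w(1) by blast
    also have "\<dots> = (sX j (\<alpha> x), y0)" using claim1[OF y0] x MA by simp
    finally show ?thesis by simp
  qed
  have "pm_automorphism n FX sX \<alpha>" unfolding pm_automorphism_def using abij acomm by blast
  then show ?thesis using claim1 by blast
qed

end
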